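(* Let $D$ be a finite distributive lattice and $Q\subseteq D$, and suppose the inclusion $Q\subseteq D$ is chain-representable, say $Q=\mathrm{Rep}(C,\sigma,D)$ for a $J(D)$-colored chain $(C,\sigma,D)$. Then there exist a finite algebra $A$ with $|A|=|C|$ and a lattice isomorphism $\phi\colon\mathrm{Con}(A)\to D$ such that $\phi(\mathrm{Princ}(A))=Q$. (Here $1_D\in Q$ is not assumed.)
   Context: $J(D)$ is the set of nonzero join-irreducible elements of $D$. A $J(D)$-colored chain is a triple $(C,\sigma,D)$ where $C$ is a finite chain and $\sigma\colon\mathrm{Prime}(C)\to J(D)$ is a surjective map from the set $\mathrm{Prime}(C)$ of prime intervals (covering pairs) of $C$ onto $J(D)$. For an interval $I$ of $C$, $\mathrm{rep}(I)=\bigvee_{\mathfrak p\in\mathrm{Prime}(I)}\sigma(\mathfrak p)$ (join in $D$, empty join $=0_D$), and $\mathrm{Rep}(C,\sigma,D)=\{\mathrm{rep}(I): I\text{ an interval of }C\}$. The inclusion $Q\subseteq D$ is chain-representable if $Q=\mathrm{Rep}(C,\sigma,D)$ for some such triple. For an algebra $A$, $\mathrm{Con}(A)$ is its congruence lattice and $\mathrm{Princ}(A)$ its set of principal congruences. *)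

theory Defs
  imports Main
begin

definition join_irreducibles :: "'d::bounded_lattice set" where
  "join_irreducibles = {x. x \<noteq> bot \<and> (\<forall>a b. x = sup a b \<longrightarrow> x = a \<or> x = b)}"

text \<open>A finite chain is a finite nonempty subset C of a linearly ordered type.
  Prime intervals are covering pairs (x,y) of C; intervals are pairs (a,b)
  with a \<le> b in C, standing for [a,b].\<close>

definition prime_intervals :: "'c::linorder set \<Rightarrow> ('c \<times> 'c) set" where
  "prime_intervals C = {(x, y). x \<in> C \<and> y \<in> C \<and> x < y \<and> \<not> (\<exists>z\<in>C. x < z \<and> z < y)}"

definition intervals :: "'c::linorder set \<Rightarrow> ('c \<times> 'c) set" where
  "intervals C = {(a, b). a \<in> C \<and> b \<in> C \<and> a \<le> b}"

definition prime_of_interval :: "'c::linorder set \<Rightarrow> 'c \<times> 'c \<Rightarrow> ('c \<times> 'c) set" where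
  "prime_of_interval C I = {(x, y) \<in> prime_intervals C. fst I \<le> x \<and> y \<le> snd I}"

definition colored_chain :: "'c::linorder set \<Rightarrow> ('c \<times> 'c \<Rightarrow> 'd::bounded_lattice) \<Rightarrow> bool" where
  "colored_chain C \<sigma> \<longleftrightarrow> finite C \<and> C \<noteq> {} \<and> \<sigma> ` prime_intervals C = join_irreducibles"

definition rep :: "'c::linorder set \<Rightarrow> ('c \<times> 'c \<Rightarrow> 'd::bounded_lattice) \<Rightarrow> 'c \<times> 'c \<Rightarrow> 'd" where
  "rep C \<sigma> I = Finite_Set.fold sup bot (\<sigma> ` prime_of_interval C I)"

definition Rep :: "'c::linorder set \<Rightarrow> ('c \<times> 'c \<Rightarrow> 'd::bounded_lattice) \<Rightarrow> 'd set" where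
  "Rep C \<sigma> = rep C \<sigma> ` intervals C"

text \<open>An algebra is a carrier A together with a set F of operations; each operation
  is a pair (n, f) where n is the arity and f acts on lists of length n.\<close>

definition is_algebra :: "'a set \<Rightarrow> (nat \<times> ('a list \<Rightarrow> 'a)) set \<Rightarrow> bool" where
  "is_algebra A F \<longleftrightarrow> A \<noteq> {} \<and>
     (\<forall>(n, f) \<in> F. \<forall>xs. length xs = n \<and> set xs \<subseteq> A \<longrightarrow> f xs \<in> A)"

definition is_congruence :: "'a set \<Rightarrow> (nat \<times> ('a list \<Rightarrow> 'a)) set \<Rightarrow> ('a \<times> 'a) set \<Rightarrow> bool" where
  "is_congruence A F \<theta> \<longleftrightarrow> equiv A \<theta> \<and>
     (\<forall>(n, f) \<in> F. \<forall>xs ys. length xs = n \<and> list_all2 (\<lambda>x y. (x, y) \<in> \<theta>) xs ys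
         \<longrightarrow> (f xs, f ys) \<in> \<theta>)"

definition Con :: "'a set \<Rightarrow> (nat \<times> ('a list \<Rightarrow> 'a)) set \<Rightarrow> ('a \<times> 'a) set set" where
  "Con A F = {\<theta>. is_congruence A F \<theta>}"

definition Cg :: "'a set \<Rightarrow> (nat \<times> ('a list \<Rightarrow> 'a)) set \<Rightarrow> ('a \<times> 'a) set \<Rightarrow> ('a \<times> 'a) set" where
  "Cg A F X = \<Inter> {\<theta> \<in> Con A F. X \<subseteq> \<theta>}"

definition con_meet :: "('a \<times> 'a) set \<Rightarrow> ('a \<times> 'a) set \<Rightarrow> ('a \<times> 'a) set" where
  "con_meet \<theta> \<psi> = \<theta> \<inter> \<psi>"

definition con_join :: "'a set \<Rightarrow> (nat \<times> ('a list \<Rightarrow> 'a)) set \<Rightarrow> ('a \<times> 'a) set \<Rightarrow> ('a \<times> 'a) set \<Rightarrow> ('a \<times> 'a) set" where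
  "con_join A F \<theta> \<psi> = Cg A F (\<theta> \<union> \<psi>)"

definition Princ :: "'a set \<Rightarrow> (nat \<times> ('a list \<Rightarrow> 'a)) set \<Rightarrow> ('a \<times> 'a) set set" where
  "Princ A F = {Cg A F {(a, b)} | a b. a \<in> A \<and> b \<in> A}"

definition con_lattice_iso :: "'a set \<Rightarrow> (nat \<times> ('a list \<Rightarrow> 'a)) set \<Rightarrow> (('a \<times> 'a) set \<Rightarrow> 'd::lattice) \<Rightarrow> bool" where
  "con_lattice_iso A F \<phi> \<longleftrightarrow> bij_betw \<phi> (Con A F) UNIV \<and>
     (\<forall>\<theta>\<in>Con A F. \<forall>\<psi>\<in>Con A F.
        \<phi> (con_meet \<theta> \<psi>) = inf (\<phi> \<theta>) (\<phi> \<psi>) \<and> \<phi> (con_join A F \<theta> \<psi>) = sup (\<phi> \<theta>) (\<phi> \<psi>))"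

end

theory Submission
  imports Defs
begin

definition fsup :: "'d::bounded_lattice set \<Rightarrow> 'd" where
  "fsup S = Finite_Set.fold sup bot S"

lemma fsup_empty[simp]: "fsup {} = bot"
  by (simp add: fsup_def)

lemma fsup_insert:
  fixes S :: "'d::bounded_lattice set"
  shows "finite S \<Longrightarrow> fsup (insert x S) = sup x (fsup S)"
proof -
  assume "finite S"
  interpret comp_fun_idem "sup :: 'd \<Rightarrow> 'd \<Rightarrow> 'd" by (fact comp_fun_idem_sup)
  show ?thesis unfolding fsup_def using \<open>finite S\<close> by (rule fold_insert_idem)
qed

lemma fsup_le_iff: "finite S \<Longrightarrow> (fsup S \<le> d) \<longleftrightarrow> (\<forall>x\<in>S. x \<le> d)"
  by (induction S rule: finite_induct) (auto simp: fsup_insert)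

lemma fsup_upper: "finite S \<Longrightarrow> x \<in> S \<Longrightarrow> x \<le> fsup S"
  using fsup_le_iff[of S "fsup S"] by auto

lemma join_prime:
  fixes j :: "'d::{distrib_lattice, bounded_lattice}"
  assumes j: "j \<in> join_irreducibles" and fin: "finite S"
  shows "j \<le> fsup S \<Longrightarrow> \<exists>s\<in>S. j \<le> s"
  using fin
proof (induction S rule: finite_induct)
  case empty
  then show ?case using j by (simp add: join_irreducibles_def bot_unique)
next
  case (insert x F)
  have "j = inf j (sup x (fsup F))" using insert by (simp add: fsup_insert inf_absorb1)
  also have "\<dots> = sup (inf j x) (inf j (fsup F))" by (rule inf_sup_distrib1)
  finally have "j = inf j x \<or> j = inf j (fsup F)" using j unfolding join_irreducibles_def by blast
  then show ?case
  proof
    assume "j = inf j x" then have "j \<le> x" by (metis inf.cobounded2)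
    then show ?thesis by auto
  next
    assume "j = inf j (fsup F)" then have "j \<le> fsup F" by (metis inf.cobounded2)
    then show ?thesis using insert by auto
  qed
qed

lemma ji_separate:
  fixes d d' :: "'d::{finite, bounded_lattice}"
  assumes "\<And>j. j \<in> join_irreducibles \<Longrightarrow> j \<le> d \<Longrightarrow> j \<le> d'"
  shows "d \<le> d'"
proof (rule ccontr)
  assume nd: "\<not> d \<le> d'"
  let ?A = "{m. m \<le> d \<and> \<not> m \<le> d'}"
  have "finite ?A" by simp
  moreover have "?A \<noteq> {}" using nd by auto
  ultimately obtain m where m: "m \<in> ?A" and mmin: "\<forall>b\<in>?A. b \<le> m \<longrightarrow> m = b"
    using finite_has_minimal by blast
  have "m \<in> join_irreducibles"
    unfolding join_irreducibles_def
  proof (intro CollectI conjI allI impI)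
    show "m \<noteq> bot" using m by auto
  next
    fix a b assume mab: "m = sup a b"
    show "m = a \<or> m = b"
    proof (rule ccontr)
      assume "\<not> (m = a \<or> m = b)"
      then have "a \<le> d'" "b \<le> d'" using mmin m mab
        by (metis (mono_tags, lifting) mem_Collect_eq order_trans sup.cobounded1 sup.cobounded2)+
      then show False using m mab by auto
    qed
  qed
  then show False using assms m by auto
qed

lemma finite_prime_of_interval: "finite C \<Longrightarrow> finite (prime_of_interval C I)"
proof -
  assume "finite C"
  have "prime_of_interval C I \<subseteq> C \<times> C"
    by (auto simp: prime_of_interval_def prime_intervals_def)
  then show ?thesis using \<open>finite C\<close> by (meson finite_SigmaI finite_subset)
qed

lemma rep_le_iff:
  "finite C \<Longrightarrow> rep C \<sigma> I \<le> d \<longleftrightarrow> (\<forall>p\<in>prime_of_interval C I. \<sigma> p \<le> d)"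
  unfolding rep_def fsup_def[symmetric]
  by (subst fsup_le_iff) (auto simp: finite_prime_of_interval)

lemma prime_of_interval_prime:
  assumes "q \<in> prime_intervals C" shows "prime_of_interval C q = {q}"
proof -
  obtain c e where q: "q = (c, e)" by (cases q)
  show ?thesis
  proof
    show "prime_of_interval C q \<subseteq> {q}"
    proof
      fix p assume p: "p \<in> prime_of_interval C q"
      obtain u v where pe: "p = (u, v)" by (cases p)
      have "c \<le> u" "v \<le> e" "u < v" "u \<in> C" "v \<in> C"
        using p pe q by (auto simp: prime_of_interval_def prime_intervals_def)
      moreover have "\<not> (\<exists>z\<in>C. c < z \<and> z < e)" using assms q by (auto simp: prime_intervals_def)
      ultimately have "u = c" "v = e"
        by (metis order.strict_trans1 order.strict_trans2 le_less)+
      then show "p \<in> {q}" using pe q by auto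
    qed
  next
    show "{q} \<subseteq> prime_of_interval C q" using assms q by (auto simp: prime_of_interval_def)
  qed
qed

lemma rep_prime: "q \<in> prime_intervals C \<Longrightarrow> rep C \<sigma> q = \<sigma> q"
  unfolding rep_def fsup_def[symmetric]
  by (simp add: prime_of_interval_prime fsup_insert)

lemma prime_of_interval_refl: "prime_of_interval C (x, x) = {}"
  by (auto simp: prime_of_interval_def prime_intervals_def)

lemma rep_refl: "rep C \<sigma> (x, x) = bot"
  unfolding rep_def by (simp add: prime_of_interval_refl)

lemma prime_split:
  fixes x y z u v :: "'c::linorder"
  assumes "(u, v) \<in> prime_intervals C" "y \<in> C" "min x z \<le> u" "v \<le> max x z"
  shows "(min x y \<le> u \<and> v \<le> max x y) \<or> (min y z \<le> u \<and> v \<le> max y z)"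
proof -
  have "u < v" "y \<le> u \<or> v \<le> y" using assms by (auto simp: prime_intervals_def not_less)
  then show ?thesis using assms(3,4) by (auto simp: min_def max_def split: if_splits)
qed

lemma chain_collapse:
  fixes C :: "'c::linorder set"
  assumes fin: "finite C" and eq: "equiv C \<theta>"
  shows "x \<in> C \<Longrightarrow> y \<in> C \<Longrightarrow> x \<le> y \<Longrightarrow>
    (\<forall>(u, v)\<in>prime_intervals C. x \<le> u \<and> v \<le> y \<longrightarrow> (u, v) \<in> \<theta>) \<Longrightarrow> (x, y) \<in> \<theta>"
proof (induction "card {z\<in>C. z < y}" arbitrary: y rule: less_induct)
  case less
  show ?case
  proof (cases "x = y")
    case True
    then show ?thesis using eq less.prems by (auto simp: equiv_def refl_on_def)
  next
    case False
    then have xy: "x < y" using less.prems by auto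
    let ?S = "{z\<in>C. z < y}"
    have finS: "finite ?S" using fin by simp
    have xS: "x \<in> ?S" using xy less.prems by auto
    define y' where "y' = Max ?S"
    have y'S: "y' \<in> ?S" unfolding y'_def using finS xS by (metis Max_in empty_iff)
    have xy': "x \<le> y'" unfolding y'_def using finS xS by simp
    have maxS: "\<And>z. z \<in> ?S \<Longrightarrow> z \<le> y'" unfolding y'_def using finS by simp
    have pr: "(y', y) \<in> prime_intervals C"
      using y'S maxS less.prems unfolding prime_intervals_def by force
    have sub: "{z\<in>C. z < y'} \<subset> ?S" using y'S by auto
    have card_lt: "card {z\<in>C. z < y'} < card ?S" using psubset_card_mono[OF finS sub] .
    have IH: "(x, y') \<in> \<theta>"
      apply (rule less.hyps[OF card_lt])
      using y'S less.prems xy' by auto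
    have "(y', y) \<in> \<theta>" using less.prems pr xy' by auto
    then show ?thesis using IH eq by (meson equiv_def transD)
  qed
qed

definition gop :: "'c::linorder \<times> 'c \<Rightarrow> 'c \<times> 'c \<Rightarrow> 'c \<Rightarrow> 'c" where
  "gop p q x = (if x \<le> fst p then fst q else snd q)"

definition ops :: "'c::linorder set \<Rightarrow> ('c \<times> 'c \<Rightarrow> 'd::bounded_lattice) \<Rightarrow> (nat \<times> ('c list \<Rightarrow> 'c)) set" where
  "ops C \<sigma> = {(1, \<lambda>xs. gop p q (hd xs)) | p q.
      p \<in> prime_intervals C \<and> q \<in> prime_intervals C \<and> \<sigma> q \<le> \<sigma> p}"

definition Th :: "'c::linorder set \<Rightarrow> ('c \<times> 'c \<Rightarrow> 'd::bounded_lattice) \<Rightarrow> 'd \<Rightarrow> ('c \<times> 'c) set" where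
  "Th C \<sigma> d = {(x, y). x \<in> C \<and> y \<in> C \<and> rep C \<sigma> (min x y, max x y) \<le> d}"

lemma Th_prime:
  assumes "q \<in> prime_intervals C" shows "q \<in> Th C \<sigma> d \<longleftrightarrow> \<sigma> q \<le> d"
proof -
  obtain a b where q: "q = (a, b)" by (cases q)
  have "a < b" "a \<in> C" "b \<in> C" using assms q by (auto simp: prime_intervals_def)
  then show ?thesis using q rep_prime[OF assms, of \<sigma>] by (auto simp: Th_def min_def max_def)
qed

lemma Th_iff:
  "finite C \<Longrightarrow> (x, y) \<in> Th C \<sigma> d \<longleftrightarrow> x \<in> C \<and> y \<in> C \<and> (\<forall>p\<in>prime_of_interval C (min x y, max x y). \<sigma> p \<le> d)"
  unfolding Th_def using rep_le_iff[of C \<sigma> "(min x y, max x y)" d] by simp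

lemma Th_equiv:
  assumes fin: "finite C"
  shows "equiv C (Th C \<sigma> d)"
proof (rule equivI)
  show "Th C \<sigma> d \<subseteq> C \<times> C" by (auto simp: Th_def)
  show "refl_on C (Th C \<sigma> d)"
    by (auto simp: refl_on_def Th_def rep_refl)
  show "sym (Th C \<sigma> d)"
    by (auto simp: sym_def Th_def min.commute max.commute)
  show "trans (Th C \<sigma> d)"
  proof (rule transI)
    fix x y z assume xy: "(x, y) \<in> Th C \<sigma> d" and yz: "(y, z) \<in> Th C \<sigma> d"
    have 1: "\<forall>p\<in>prime_of_interval C (min x y, max x y). \<sigma> p \<le> d"
      using xy Th_iff[OF fin] by blast
    have 2: "\<forall>p\<in>prime_of_interval C (min y z, max y z). \<sigma> p \<le> d"
      using yz Th_iff[OF fin] by blast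
    have "\<forall>p\<in>prime_of_interval C (min x z, max x z). \<sigma> p \<le> d"
    proof
      fix p assume p: "p \<in> prime_of_interval C (min x z, max x z)"
      obtain u v where pe: "p = (u, v)" by (cases p)
      have pr: "(u, v) \<in> prime_intervals C" "min x z \<le> u" "v \<le> max x z"
        using p pe by (auto simp: prime_of_interval_def)
      have yC: "y \<in> C" using xy by (auto simp: Th_def)
      from prime_split[OF pr(1) yC pr(2,3)] 1 2 pr(1) pe show "\<sigma> p \<le> d"
        by (auto simp: prime_of_interval_def)
    qed
    then show "(x, z) \<in> Th C \<sigma> d" using xy yz Th_iff[OF fin] by blast
  qed
qed

lemma gop_compat:
  assumes fin: "finite C" and p: "p \<in> prime_intervals C" and q: "q \<in> prime_intervals C"
    and le: "\<sigma> q \<le> \<sigma> p" and xy: "(x, y) \<in> Th C \<sigma> d"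
  shows "(gop p q x, gop p q y) \<in> Th C \<sigma> d"
proof -
  obtain a b where pe: "p = (a, b)" by (cases p)
  obtain c e where qe: "q = (c, e)" by (cases q)
  have ab: "a < b" "a \<in> C" "b \<in> C" "\<not> (\<exists>z\<in>C. a < z \<and> z < b)"
    using p pe by (auto simp: prime_intervals_def)
  have ce: "c < e" "c \<in> C" "e \<in> C" using q qe by (auto simp: prime_intervals_def)
  have xyC: "x \<in> C" "y \<in> C" using xy by (auto simp: Th_def)
  have gC: "gop p q t \<in> C" for t using ce qe by (auto simp: gop_def)
  show ?thesis
  proof (cases "(x \<le> a) = (y \<le> a)")
    case True
    then have "gop p q x = gop p q y" by (simp add: gop_def pe)
    then show ?thesis using gC by (auto simp: Th_def rep_refl)
  next
    case False
    have mn: "min x y \<le> a" "a < max x y" using False by (auto simp: min_def max_def)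
    have "max x y \<in> C" using xyC by (simp add: max_def)
    then have "b \<le> max x y" using ab mn by (meson not_less)
    then have "p \<in> prime_of_interval C (min x y, max x y)"
      using p pe mn by (auto simp: prime_of_interval_def)
    then have "\<sigma> p \<le> d" using xy Th_iff[OF fin] by blast
    then have "\<sigma> q \<le> d" using le by simp
    then have "q \<in> Th C \<sigma> d" using Th_prime[OF q, of \<sigma> d] by simp
    moreover have "{gop p q x, gop p q y} = {c, e}" using False pe qe by (auto simp: gop_def)
    moreover have "sym (Th C \<sigma> d)" using Th_equiv[OF fin, of \<sigma> d] by (simp add: equiv_def)
    ultimately show ?thesis using qe by (auto simp: doubleton_eq_iff dest: symD)
  qed
qed

lemma Th_cong:
  assumes fin: "finite C"
  shows "is_congruence C (ops C \<sigma>) (Th C \<sigma> d)"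
  unfolding is_congruence_def
proof (intro conjI Th_equiv[OF fin])
  show "\<forall>(n, f)\<in>ops C \<sigma>. \<forall>xs ys. length xs = n \<and> list_all2 (\<lambda>x y. (x, y) \<in> Th C \<sigma> d) xs ys \<longrightarrow> (f xs, f ys) \<in> Th C \<sigma> d"
  proof (clarsimp simp: ops_def)
    fix p q xs ys
    assume pq: "p \<in> prime_intervals C" "q \<in> prime_intervals C" "\<sigma> q \<le> \<sigma> p"
      and h: "length xs = Suc 0" "list_all2 (\<lambda>x y. (x, y) \<in> Th C \<sigma> d) xs ys"
    obtain x y where "xs = [x]" "ys = [y]" "(x, y) \<in> Th C \<sigma> d"
      using h by (cases xs; cases ys) (auto simp: list_all2_Cons1)
    then show "(gop p q (hd xs), gop p q (hd ys)) \<in> Th C \<sigma> d"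
      using gop_compat[OF fin pq] by simp
  qed
qed

lemma cong_apply:
  assumes c: "is_congruence C (ops C \<sigma>) \<theta>" and pq: "p \<in> prime_intervals C" "q \<in> prime_intervals C" "\<sigma> q \<le> \<sigma> p"
    and xy: "(x, y) \<in> \<theta>"
  shows "(gop p q x, gop p q y) \<in> \<theta>"
proof -
  have mem: "(1, \<lambda>xs. gop p q (hd xs)) \<in> ops C \<sigma>" unfolding ops_def using pq by blast
  have "\<forall>(n, f)\<in>ops C \<sigma>. \<forall>xs ys. length xs = n \<and> list_all2 (\<lambda>x y. (x, y) \<in> \<theta>) xs ys \<longrightarrow> (f xs, f ys) \<in> \<theta>"
    using c by (simp add: is_congruence_def)
  from bspec[OF this mem] have "\<forall>xs ys. length xs = 1 \<and> list_all2 (\<lambda>x y. (x, y) \<in> \<theta>) xs ys \<longrightarrow> (gop p q (hd xs), gop p q (hd ys)) \<in> \<theta>"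
    by simp
  from this[rule_format, of "[x]" "[y]"] show ?thesis using xy by simp
qed

lemma Con_char:
  fixes C :: "'c::linorder set" and \<sigma> :: "'c \<times> 'c \<Rightarrow> 'd::{finite, distrib_lattice, bounded_lattice}"
  assumes cc: "colored_chain C \<sigma>" and c: "is_congruence C (ops C \<sigma>) \<theta>"
  shows "\<theta> = Th C \<sigma> (fsup (\<sigma> ` {p \<in> prime_intervals C. p \<in> \<theta>}))"
proof -
  have fin: "finite C" using cc by (simp add: colored_chain_def)
  have J: "\<sigma> ` prime_intervals C = join_irreducibles" using cc by (simp add: colored_chain_def)
  have eq: "equiv C \<theta>" using c by (simp add: is_congruence_def)
  let ?P = "{p \<in> prime_intervals C. p \<in> \<theta>}"
  have finP: "finite ?P"
  proof -
    have "?P \<subseteq> C \<times> C" by (auto simp: prime_intervals_def)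
    then show ?thesis using fin by (meson finite_SigmaI finite_subset)
  qed
  let ?d = "fsup (\<sigma> ` ?P)"
  show ?thesis
  proof
    show "\<theta> \<subseteq> Th C \<sigma> ?d"
    proof (clarify)
      fix x y assume xy: "(x, y) \<in> \<theta>"
      have xyC: "x \<in> C" "y \<in> C" using xy eq by (auto simp: equiv_def refl_on_def)
      have mm: "(min x y, max x y) \<in> \<theta>"
        using xy eq by (cases "x \<le> y") (auto simp: min_def max_def equiv_def dest: symD)
      have "\<forall>p\<in>prime_of_interval C (min x y, max x y). \<sigma> p \<le> ?d"
      proof
        fix p assume p: "p \<in> prime_of_interval C (min x y, max x y)"
        obtain a b where pe: "p = (a, b)" by (cases p)
        have pp: "p \<in> prime_intervals C" "min x y \<le> a" "b \<le> max x y" "a < b"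
          using p pe by (auto simp: prime_of_interval_def prime_intervals_def)
        have "(gop p p (min x y), gop p p (max x y)) \<in> \<theta>"
          using cong_apply[OF c pp(1) pp(1) order.refl mm] .
        moreover have "gop p p (min x y) = a" "gop p p (max x y) = b"
          using pp pe order.strict_trans2[of a b "max x y"] by (auto simp: gop_def max_def split: if_splits)
        ultimately have "p \<in> ?P" using pp pe by auto
        then show "\<sigma> p \<le> ?d" using fsup_upper finP by blast
      qed
      then show "(x, y) \<in> Th C \<sigma> ?d" using xyC Th_iff[OF fin] by blast
    qed
  next
    show "Th C \<sigma> ?d \<subseteq> \<theta>"
    proof (clarify)
      fix x y assume xy: "(x, y) \<in> Th C \<sigma> ?d"
      have xyC: "x \<in> C" "y \<in> C" and all: "\<forall>p\<in>prime_of_interval C (min x y, max x y). \<sigma> p \<le> ?d"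
        using xy Th_iff[OF fin] by blast+
      have mmC: "min x y \<in> C" "max x y \<in> C" using xyC by (auto simp: min_def max_def)
      have cond: "\<forall>(u, v)\<in>prime_intervals C. min x y \<le> u \<and> v \<le> max x y \<longrightarrow> (u, v) \<in> \<theta>"
      proof (clarify)
        fix u v assume uv: "(u, v) \<in> prime_intervals C" "min x y \<le> u" "v \<le> max x y"
        then have "\<sigma> (u, v) \<le> ?d" using all by (auto simp: prime_of_interval_def)
        moreover have "\<sigma> (u, v) \<in> join_irreducibles" using J uv by blast
        ultimately obtain s where s: "s \<in> \<sigma> ` ?P" "\<sigma> (u, v) \<le> s"
          using join_prime finP by blast
        then obtain p where p: "p \<in> ?P" "\<sigma> (u, v) \<le> \<sigma> p" by auto
        obtain a b where pe: "p = (a, b)" by (cases p)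
        have ab: "a < b" using p pe by (auto simp: prime_intervals_def)
        have uvl: "u < v" using uv by (auto simp: prime_intervals_def)
        have "(gop p (u, v) a, gop p (u, v) b) \<in> \<theta>"
          using cong_apply[OF c _ uv(1) p(2)] p pe by auto
        moreover have "\<not> b \<le> a" using ab by simp
        ultimately show "(u, v) \<in> \<theta>" using pe by (simp add: gop_def)
      qed
      have "(min x y, max x y) \<in> \<theta>"
        using chain_collapse[OF fin eq mmC _ cond] by (metis min.cobounded1 max.cobounded1 order.trans)
      then show "(x, y) \<in> \<theta>"
        using eq by (cases "x \<le> y") (auto simp: min_def max_def equiv_def dest: symD)
    qed
  qed
qed

lemma Th_le_iff:
  fixes C :: "'c::linorder set" and \<sigma> :: "'c \<times> 'c \<Rightarrow> 'd::{finite, distrib_lattice, bounded_lattice}"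
  assumes cc: "colored_chain C \<sigma>"
  shows "Th C \<sigma> d \<subseteq> Th C \<sigma> e \<longleftrightarrow> d \<le> e"
proof
  assume sub: "Th C \<sigma> d \<subseteq> Th C \<sigma> e"
  have J: "\<sigma> ` prime_intervals C = join_irreducibles" using cc by (simp add: colored_chain_def)
  show "d \<le> e"
  proof (rule ji_separate)
    fix j assume "j \<in> join_irreducibles" "j \<le> d"
    then obtain q where q: "q \<in> prime_intervals C" "j = \<sigma> q" using J by blast
    then have "q \<in> Th C \<sigma> d" using Th_prime \<open>j \<le> d\<close> by metis
    then have "q \<in> Th C \<sigma> e" using sub by blast
    then show "j \<le> e" using Th_prime q by metis
  qed
next
  assume "d \<le> e" then show "Th C \<sigma> d \<subseteq> Th C \<sigma> e" by (auto simp: Th_def)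
qed

lemma Con_range:
  fixes C :: "'c::linorder set" and \<sigma> :: "'c \<times> 'c \<Rightarrow> 'd::{finite, distrib_lattice, bounded_lattice}"
  assumes cc: "colored_chain C \<sigma>"
  shows "Con C (ops C \<sigma>) = range (Th C \<sigma>)"
proof -
  have fin: "finite C" using cc by (simp add: colored_chain_def)
  show ?thesis
    using Con_char[OF cc] Th_cong[OF fin] unfolding Con_def by blast
qed

lemma Cg_Th:
  fixes C :: "'c::linorder set" and \<sigma> :: "'c \<times> 'c \<Rightarrow> 'd::{finite, distrib_lattice, bounded_lattice}"
  assumes cc: "colored_chain C \<sigma>" and X: "X \<subseteq> Th C \<sigma> d"
    and least: "\<And>e. X \<subseteq> Th C \<sigma> e \<Longrightarrow> d \<le> e"
  shows "Cg C (ops C \<sigma>) X = Th C \<sigma> d"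
proof -
  have CR: "Con C (ops C \<sigma>) = range (Th C \<sigma>)" by (rule Con_range[OF cc])
  have mem: "Th C \<sigma> d \<in> {\<theta> \<in> Con C (ops C \<sigma>). X \<subseteq> \<theta>}" using CR X by auto
  have lb: "\<forall>\<theta>\<in>{\<theta> \<in> Con C (ops C \<sigma>). X \<subseteq> \<theta>}. Th C \<sigma> d \<subseteq> \<theta>"
  proof
    fix \<theta> assume "\<theta> \<in> {\<theta> \<in> Con C (ops C \<sigma>). X \<subseteq> \<theta>}"
    then obtain e where "\<theta> = Th C \<sigma> e" "X \<subseteq> Th C \<sigma> e" using CR by auto
    then show "Th C \<sigma> d \<subseteq> \<theta>" using least Th_le_iff[OF cc] by blast
  qed
  show ?thesis unfolding Cg_def
    using mem lb by (intro antisym) (blast, blast)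
qed

theorem proposition1p8:
  fixes C :: "'c::linorder set"
    and \<sigma> :: "'c \<times> 'c \<Rightarrow> 'd::{finite, distrib_lattice, bounded_lattice}"
    and Q :: "'d set"
  assumes "colored_chain C \<sigma>"
    and "Q = Rep C \<sigma>"
  shows "\<exists>(A :: 'c set) (F :: (nat \<times> ('c list \<Rightarrow> 'c)) set) (\<phi> :: ('c \<times> 'c) set \<Rightarrow> 'd).
           is_algebra A F \<and> finite A \<and> card A = card C \<and>
           con_lattice_iso A F \<phi> \<and> \<phi> ` Princ A F = Q"
proof -
  note cc = assms(1)
  have fin: "finite C" and ne: "C \<noteq> {}" using cc by (auto simp: colored_chain_def)
  let ?F = "ops C \<sigma>"
  let ?T = "Th C \<sigma>"
  define \<phi> where "\<phi> = inv_into UNIV ?T"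
  have inj: "inj ?T"
    by (rule injI) (metis Th_le_iff[OF cc] order.antisym order.refl)
  have phiT: "\<phi> (?T x) = x" for x unfolding \<phi>_def using inj by (simp add: inv_into_f_f)
  have CR: "Con C ?F = range ?T" by (rule Con_range[OF cc])
  have alg: "is_algebra C ?F"
    unfolding is_algebra_def
  proof (intro conjI ne ballI)
    fix nf assume "nf \<in> ?F"
    then obtain p q where nf: "nf = (1, \<lambda>xs. gop p q (hd xs))" "q \<in> prime_intervals C"
      by (auto simp: ops_def)
    have "fst q \<in> C" "snd q \<in> C" using nf(2) by (auto simp: prime_intervals_def)
    then show "case nf of (n, f) \<Rightarrow> \<forall>xs. length xs = n \<and> set xs \<subseteq> C \<longrightarrow> f xs \<in> C"
      using nf(1) by (auto simp: gop_def)
  qed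
  have bij: "bij_betw \<phi> (Con C ?F) UNIV"
    unfolding \<phi>_def CR by (rule bij_betw_inv_into[OF inj_on_imp_bij_betw[OF inj]])
  have meet: "con_meet (?T d) (?T e) = ?T (inf d e)" for d e
    by (auto simp: con_meet_def Th_def)
  have join: "con_join C ?F (?T d) (?T e) = ?T (sup d e)" for d e
    unfolding con_join_def
  proof (rule Cg_Th[OF cc])
    show "?T d \<union> ?T e \<subseteq> ?T (sup d e)" using Th_le_iff[OF cc] by (metis Un_least sup.cobounded1 sup.cobounded2)
  next
    fix f assume "?T d \<union> ?T e \<subseteq> ?T f"
    then show "sup d e \<le> f" using Th_le_iff[OF cc] by (metis le_sup_iff sup.cobounded1 sup.cobounded2 le_supI)
  qed
  have iso: "con_lattice_iso C ?F \<phi>"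
    unfolding con_lattice_iso_def
  proof (rule conjI[OF bij], intro ballI)
    fix \<theta> \<psi> assume "\<theta> \<in> Con C ?F" "\<psi> \<in> Con C ?F"
    then obtain d e where de: "\<theta> = ?T d" "\<psi> = ?T e" using CR by auto
    show "\<phi> (con_meet \<theta> \<psi>) = inf (\<phi> \<theta>) (\<phi> \<psi>) \<and> \<phi> (con_join C ?F \<theta> \<psi>) = sup (\<phi> \<theta>) (\<phi> \<psi>)"
      using de meet join phiT by simp
  qed
  have princ: "Cg C ?F {(a, b)} = ?T (rep C \<sigma> (min a b, max a b))" if "a \<in> C" "b \<in> C" for a b
    by (rule Cg_Th[OF cc]) (use that in \<open>auto simp: Th_def\<close>)
  have "\<phi> ` Princ C ?F = Rep C \<sigma>"
  proof
    show "\<phi> ` Princ C ?F \<subseteq> Rep C \<sigma>"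
    proof
      fix r assume "r \<in> \<phi> ` Princ C ?F"
      then obtain a b where ab: "a \<in> C" "b \<in> C" "r = \<phi> (Cg C ?F {(a, b)})"
        by (auto simp: Princ_def)
      then have "r = rep C \<sigma> (min a b, max a b)" using princ phiT by simp
      moreover have "(min a b, max a b) \<in> intervals C" using ab by (auto simp: intervals_def min_def max_def)
      ultimately show "r \<in> Rep C \<sigma>" by (auto simp: Rep_def)
    qed
  next
    show "Rep C \<sigma> \<subseteq> \<phi> ` Princ C ?F"
    proof
      fix r assume "r \<in> Rep C \<sigma>"
      then obtain a b where ab: "a \<in> C" "b \<in> C" "a \<le> b" "r = rep C \<sigma> (a, b)"
        by (auto simp: Rep_def intervals_def)
      then have "r = \<phi> (Cg C ?F {(a, b)})" using princ phiT by (simp add: min_def max_def)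
      moreover have "Cg C ?F {(a, b)} \<in> Princ C ?F" using ab by (auto simp: Princ_def)
      ultimately show "r \<in> \<phi> ` Princ C ?F" by blast
    qed
  qed
  then show ?thesis using alg fin iso assms(2) by blast
qed

end
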